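(* Consider a finite tabular MDP with a unique optimal policy $\pi^*$ and $d_\rho^\pi(s)\ge d_{\min}>0$ for all states $s$ and all full-support policies $\pi$. For any $\eta\in(0,\infty)$, let $\pi_t$ be generated by the discrete DG update $\pi_{t+1}(a|s)=\pi_t(a|s)e^{\alpha w_t(s,a)U_t(s,a)}/Z^t_s$ with sufficiently small step size $\alpha>0$ (as required for $\pi_t\to\pi^*$). Then $\delta_t:=V^*-V(\pi_t)=O(1/t)$.
   Context: A finite MDP $(\mathcal S,\mathcal A,P,r,\gamma,\rho)$ with $r(s,a)\in[0,1]$, $\gamma\in[0,1)$; tabular softmax policies. $V^\pi,Q^\pi$ discounted value functions, $V(\pi)=\mathbb{E}_{s\sim\rho}V^\pi(s)$, $V^*=V(\pi^* )$, $d_\rho^\pi(s)=(1-\gamma)\sum_{t\ge0}\gamma^t\Pr(s_t=s\mid\rho,\pi)$. $U_t(s,a):=Q^{\pi_t}(s,a)-V^{\pi_t}(s)$, $\ell_t(s,a):=-\log\pi_t(a|s)$, $w_t(s,a):=\sigma(U_t(s,a)\ell_t(s,a)/\eta)$ with $\sigma(x)=1/(1+e^{-x})$, $Z^t_s:=\sum_{a'}\pi_t(a'|s)e^{\alpha w_t(s,a')U_t(s,a')}$. *)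

theory Defs
  imports Complex_Main "HOL-Library.Landau_Symbols"
begin

text \<open>A (stochastic, tabular) policy is a function pi s a = pi(a|s).\<close>

definition is_dist :: "('x::finite \<Rightarrow> real) \<Rightarrow> bool" where
  "is_dist \<mu> \<longleftrightarrow> (\<forall>x. 0 \<le> \<mu> x) \<and> (\<Sum>x\<in>UNIV. \<mu> x) = 1"

definition is_policy :: "('s::finite \<Rightarrow> 'a::finite \<Rightarrow> real) \<Rightarrow> bool" where
  "is_policy \<pi> \<longleftrightarrow> (\<forall>s. is_dist (\<pi> s))"

definition full_support :: "('s::finite \<Rightarrow> 'a::finite \<Rightarrow> real) \<Rightarrow> bool" where
  "full_support \<pi> \<longleftrightarrow> is_policy \<pi> \<and> (\<forall>s a. 0 < \<pi> s a)"

definition is_mdp :: "('s::finite \<Rightarrow> 'a::finite \<Rightarrow> 's \<Rightarrow> real) \<Rightarrow> ('s \<Rightarrow> 'a \<Rightarrow> real)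
    \<Rightarrow> real \<Rightarrow> ('s \<Rightarrow> real) \<Rightarrow> bool" where
  "is_mdp P r \<gamma> \<rho> \<longleftrightarrow> (\<forall>s a. is_dist (P s a)) \<and> (\<forall>s a. 0 \<le> r s a \<and> r s a \<le> 1)
     \<and> 0 \<le> \<gamma> \<and> \<gamma> < 1 \<and> is_dist \<rho>"

fun state_dist :: "('s::finite \<Rightarrow> 'a::finite \<Rightarrow> 's \<Rightarrow> real) \<Rightarrow> ('s \<Rightarrow> 'a \<Rightarrow> real)
    \<Rightarrow> ('s \<Rightarrow> real) \<Rightarrow> nat \<Rightarrow> 's \<Rightarrow> real" where
  "state_dist P \<pi> \<mu> 0 = \<mu>"
| "state_dist P \<pi> \<mu> (Suc t) =
     (\<lambda>s'. \<Sum>s\<in>UNIV. state_dist P \<pi> \<mu> t s * (\<Sum>a\<in>UNIV. \<pi> s a * P s a s'))"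

definition Vf :: "('s::finite \<Rightarrow> 'a::finite \<Rightarrow> 's \<Rightarrow> real) \<Rightarrow> ('s \<Rightarrow> 'a \<Rightarrow> real) \<Rightarrow> real
    \<Rightarrow> ('s \<Rightarrow> 'a \<Rightarrow> real) \<Rightarrow> 's \<Rightarrow> real" where
  "Vf P r \<gamma> \<pi> s = (\<Sum>t. \<gamma> ^ t * (\<Sum>s'\<in>UNIV. state_dist P \<pi> (\<lambda>x. if x = s then 1 else 0) t s'
                                   * (\<Sum>a\<in>UNIV. \<pi> s' a * r s' a)))"

definition Qf :: "('s::finite \<Rightarrow> 'a::finite \<Rightarrow> 's \<Rightarrow> real) \<Rightarrow> ('s \<Rightarrow> 'a \<Rightarrow> real) \<Rightarrow> real
    \<Rightarrow> ('s \<Rightarrow> 'a \<Rightarrow> real) \<Rightarrow> 's \<Rightarrow> 'a \<Rightarrow> real" where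
  "Qf P r \<gamma> \<pi> s a = r s a + \<gamma> * (\<Sum>s'\<in>UNIV. P s a s' * Vf P r \<gamma> \<pi> s')"

definition Vrho :: "('s::finite \<Rightarrow> 'a::finite \<Rightarrow> 's \<Rightarrow> real) \<Rightarrow> ('s \<Rightarrow> 'a \<Rightarrow> real) \<Rightarrow> real
    \<Rightarrow> ('s \<Rightarrow> real) \<Rightarrow> ('s \<Rightarrow> 'a \<Rightarrow> real) \<Rightarrow> real" where
  "Vrho P r \<gamma> \<rho> \<pi> = (\<Sum>s\<in>UNIV. \<rho> s * Vf P r \<gamma> \<pi> s)"

definition visit :: "('s::finite \<Rightarrow> 'a::finite \<Rightarrow> 's \<Rightarrow> real) \<Rightarrow> real \<Rightarrow> ('s \<Rightarrow> real)
    \<Rightarrow> ('s \<Rightarrow> 'a \<Rightarrow> real) \<Rightarrow> 's \<Rightarrow> real" where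
  "visit P \<gamma> \<rho> \<pi> s = (1 - \<gamma>) * (\<Sum>t. \<gamma> ^ t * state_dist P \<pi> \<rho> t s)"

definition optimal_policy :: "('s::finite \<Rightarrow> 'a::finite \<Rightarrow> 's \<Rightarrow> real) \<Rightarrow> ('s \<Rightarrow> 'a \<Rightarrow> real)
    \<Rightarrow> real \<Rightarrow> ('s \<Rightarrow> 'a \<Rightarrow> real) \<Rightarrow> bool" where
  "optimal_policy P r \<gamma> \<pi>s \<longleftrightarrow> is_policy \<pi>s \<and>
     (\<forall>\<pi>. is_policy \<pi> \<longrightarrow> (\<forall>s. Vf P r \<gamma> \<pi> s \<le> Vf P r \<gamma> \<pi>s s))"

definition sigmoid :: "real \<Rightarrow> real" where
  "sigmoid x = 1 / (1 + exp (- x))"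

definition Uf where
  "Uf P r \<gamma> \<pi> s a = Qf P r \<gamma> \<pi> s a - Vf P r \<gamma> \<pi> s"

definition wf :: "('s::finite \<Rightarrow> 'a::finite \<Rightarrow> 's \<Rightarrow> real) \<Rightarrow> ('s \<Rightarrow> 'a \<Rightarrow> real) \<Rightarrow> real
    \<Rightarrow> real \<Rightarrow> ('s \<Rightarrow> 'a \<Rightarrow> real) \<Rightarrow> 's \<Rightarrow> 'a \<Rightarrow> real" where
  "wf P r \<gamma> \<eta> \<pi> s a = sigmoid (Uf P r \<gamma> \<pi> s a * (- ln (\<pi> s a)) / \<eta>)"

definition dg_step :: "('s::finite \<Rightarrow> 'a::finite \<Rightarrow> 's \<Rightarrow> real) \<Rightarrow> ('s \<Rightarrow> 'a \<Rightarrow> real) \<Rightarrow> real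
    \<Rightarrow> real \<Rightarrow> real \<Rightarrow> ('s \<Rightarrow> 'a \<Rightarrow> real) \<Rightarrow> ('s \<Rightarrow> 'a \<Rightarrow> real)" where
  "dg_step P r \<gamma> \<eta> \<alpha> \<pi> = (\<lambda>s a.
     \<pi> s a * exp (\<alpha> * wf P r \<gamma> \<eta> \<pi> s a * Uf P r \<gamma> \<pi> s a)
     / (\<Sum>a'\<in>UNIV. \<pi> s a' * exp (\<alpha> * wf P r \<gamma> \<eta> \<pi> s a' * Uf P r \<gamma> \<pi> s a')))"

definition dg_iter where
  "dg_iter P r \<gamma> \<eta> \<alpha> \<pi>0 t = (dg_step P r \<gamma> \<eta> \<alpha> ^^ t) \<pi>0"

end

theory Submission
  imports Defs
begin



lemma rate_z:
  fixes z :: "nat \<Rightarrow> real"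
  assumes nn: "\<And>n. 0 \<le> z n" and st: "\<And>n. z (Suc n) \<le> z n - (z n)^2"
  shows "z n \<le> 1 / (real n + 1)"
proof (induction n)
  case 0
  have "0 \<le> z 0 - (z 0)^2" using nn[of 1] st[of 0] by simp
  then have "z 0 * z 0 \<le> z 0 * 1" by (simp add: power2_eq_square)
  then have "z 0 \<le> 1" using nn[of 0] by (cases "z 0 = 0") auto
  then show ?case by simp
next
  case (Suc n)
  show ?case
  proof (cases "n = 0")
    case True
    have "z 0 - (z 0)^2 \<le> 1/4"
    proof -
      have "0 \<le> (z 0 - 1/2)^2" by simp
      then show ?thesis by (simp add: power2_eq_square algebra_simps)
    qed
    then show ?thesis using True st[of 0] by simp
  next
    case False
    define c where "c = 1 / (real n + 1)"
    have c0: "0 \<le> c" and c2: "2 * c \<le> 1" using False by (auto simp: c_def field_simps)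
    have zc: "z n \<le> c" using Suc c_def by simp
    have "0 \<le> (c - z n) * (1 - c - z n)" using zc c2 by (intro mult_nonneg_nonneg) auto
    then have "z n - (z n)^2 \<le> c - c^2" by (simp add: power2_eq_square algebra_simps)
    also have "c - c^2 \<le> 1 / (real (Suc n) + 1)"
    proof -
      have n1: "real n + 1 > 0" by simp
      have "1 - c = real n / (real n + 1)" unfolding c_def using n1 by (simp add: field_simps)
      moreover have "c - c^2 = c * (1 - c)" by (simp add: power2_eq_square algebra_simps)
      ultimately have "c - c^2 = (1 / (real n + 1)) * (real n / (real n + 1))"
        unfolding c_def by simp
      also have "\<dots> = real n / (real n + 1)^2" by (simp add: power2_eq_square)
      also have "\<dots> \<le> 1 / (real n + 2)"
      proof -
        have "real n * (real n + 2) \<le> (real n + 1)^2" by (simp add: power2_eq_square algebra_simps)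
        then show ?thesis by (simp add: divide_simps)
      qed
      finally show ?thesis by (simp add: add.commute)
    qed
    finally show ?thesis using st[of n] by simp
  qed
qed

lemma rate:
  fixes x :: "nat \<Rightarrow> real"
  assumes k: "\<kappa> > 0" and nn: "\<And>t. t \<ge> T \<Longrightarrow> 0 \<le> x t"
    and st: "\<And>t. t \<ge> T \<Longrightarrow> x (Suc t) \<le> x t - \<kappa> * (x t)^2"
  shows "x \<in> O(\<lambda>t. 1 / real t)"
proof -
  define z where "z n = \<kappa> * x (T + n)" for n
  have zb: "z n \<le> 1 / (real n + 1)" for n
  proof (rule rate_z)
    show "0 \<le> z n" for n using nn[of "T+n"] k unfolding z_def by simp
    show "z (Suc n) \<le> z n - (z n)^2" for n
    proof -
      have "x (T + Suc n) \<le> x (T+n) - \<kappa> * (x (T+n))^2" using st[of "T+n"] by simp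
      then have "\<kappa> * x (T + Suc n) \<le> \<kappa> * (x (T+n) - \<kappa> * (x (T+n))^2)" using k by (intro mult_left_mono) auto
      then show ?thesis unfolding z_def by (simp add: power2_eq_square algebra_simps)
    qed
  qed
  show ?thesis
  proof (rule bigoI[where c = "(real T + 1) / \<kappa>"])
    show "eventually (\<lambda>t. norm (x t) \<le> (real T + 1) / \<kappa> * norm (1 / real t)) at_top"
      unfolding eventually_at_top_linorder
    proof (intro exI[of _ "Suc T"] allI impI)
      fix t assume t: "Suc T \<le> t"
      define n where "n = t - T"
      have tn: "t = T + n" using t unfolding n_def by simp
      have "\<kappa> * x t \<le> 1 / (real n + 1)" using zb[of n] unfolding z_def tn by simp
      then have "\<kappa> * x t * (real n + 1) \<le> 1"
        using pos_le_divide_eq[of "real n + 1" "\<kappa> * x t" 1] by simp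
      then have "x t * (\<kappa> * (real n + 1)) \<le> 1" by (simp add: algebra_simps)
      then have xt: "x t \<le> 1 / (\<kappa> * (real n + 1))" using k by (subst pos_le_divide_eq) auto
      have "real t \<le> (real T + 1) * (real n + 1)"
      proof -
        have "real t = real T + real n" using tn by simp
        moreover have "0 \<le> real T * real n" by simp
        ultimately show ?thesis by (simp add: algebra_simps)
      qed
      then have "1 / (real n + 1) \<le> (real T + 1) / real t"
        using t by (simp add: divide_simps)
      then have "(1 / \<kappa>) * (1 / (real n + 1)) \<le> (1 / \<kappa>) * ((real T + 1) / real t)"
        using k by (intro mult_left_mono) auto
      then have "1 / (\<kappa> * (real n + 1)) \<le> (real T + 1) / \<kappa> * (1 / real t)"
        by simp
      then show "norm (x t) \<le> (real T + 1) / \<kappa> * norm (1 / real t)"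
        using xt nn[of t] t by simp
    qed
  qed
qed




locale mdpl =
  fixes P :: "'s::finite \<Rightarrow> 'a::finite \<Rightarrow> 's \<Rightarrow> real" and r :: "'s \<Rightarrow> 'a \<Rightarrow> real" and \<gamma> :: real
  assumes Pnn: "\<And>s a s'. 0 \<le> P s a s'" and Psum: "\<And>s a. (\<Sum>s'\<in>UNIV. P s a s') = 1"
    and r0: "\<And>s a. 0 \<le> r s a" and r1: "\<And>s a. r s a \<le> 1"
    and g0: "0 \<le> \<gamma>" and g1: "\<gamma> < 1"
begin

definition K :: "('s \<Rightarrow> 'a \<Rightarrow> real) \<Rightarrow> 's \<Rightarrow> ('s \<Rightarrow> real) \<Rightarrow> real" where
  "K \<pi> s D = (\<Sum>a\<in>UNIV. \<pi> s a * (\<Sum>s'\<in>UNIV. P s a s' * D s'))"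

definition rp :: "('s \<Rightarrow> 'a \<Rightarrow> real) \<Rightarrow> 's \<Rightarrow> real" where
  "rp \<pi> s = (\<Sum>a\<in>UNIV. \<pi> s a * r s a)"

definition Pp :: "('s \<Rightarrow> 'a \<Rightarrow> real) \<Rightarrow> 's \<Rightarrow> 's \<Rightarrow> real" where
  "Pp \<pi> s s' = (\<Sum>a\<in>UNIV. \<pi> s a * P s a s')"

lemma sd_Suc: "state_dist P \<pi> \<mu> (Suc n) s' = (\<Sum>s\<in>UNIV. state_dist P \<pi> \<mu> n s * Pp \<pi> s s')"
  by (simp add: Pp_def)

lemma K_Pp: "K \<pi> s D = (\<Sum>s'\<in>UNIV. Pp \<pi> s s' * D s')"
  unfolding K_def Pp_def
  by (simp add: sum_distrib_left sum_distrib_right mult.assoc) (rule sum.swap)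

lemma sd_dot_Suc: "(\<Sum>x\<in>UNIV. state_dist P \<pi> \<mu> (Suc n) x * D x) = (\<Sum>s\<in>UNIV. state_dist P \<pi> \<mu> n s * K \<pi> s D)"
  unfolding sd_Suc K_Pp
  by (simp add: sum_distrib_left sum_distrib_right mult.assoc) (rule sum.swap)

lemma policy_nn: "is_policy \<pi> \<Longrightarrow> 0 \<le> \<pi> s a"
  by (simp add: is_policy_def is_dist_def)
lemma policy_sum: "is_policy \<pi> \<Longrightarrow> (\<Sum>a\<in>UNIV. \<pi> s a) = 1"
  by (simp add: is_policy_def is_dist_def)

lemma Pp_nn: "is_policy \<pi> \<Longrightarrow> 0 \<le> Pp \<pi> s s'"
  unfolding Pp_def by (intro sum_nonneg mult_nonneg_nonneg policy_nn Pnn)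
lemma Pp_sum: "is_policy \<pi> \<Longrightarrow> (\<Sum>s'\<in>UNIV. Pp \<pi> s s') = 1"
proof -
  assume p: "is_policy \<pi>"
  have "(\<Sum>s'\<in>UNIV. \<Sum>a\<in>UNIV. \<pi> s a * P s a s') = (\<Sum>a\<in>UNIV. \<Sum>s'\<in>UNIV. \<pi> s a * P s a s')"
    by (rule sum.swap)
  also have "\<dots> = (\<Sum>a\<in>UNIV. \<pi> s a)" by (simp add: Psum flip: sum_distrib_left)
  finally show ?thesis unfolding Pp_def using policy_sum[OF p] by simp
qed

lemma rp_bounds: "is_policy \<pi> \<Longrightarrow> 0 \<le> rp \<pi> s \<and> rp \<pi> s \<le> 1"
proof
  assume p: "is_policy \<pi>"
  show "0 \<le> rp \<pi> s" unfolding rp_def by (intro sum_nonneg mult_nonneg_nonneg policy_nn[OF p] r0)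
  have "rp \<pi> s \<le> (\<Sum>a\<in>UNIV. \<pi> s a * 1)" unfolding rp_def
    by (intro sum_mono mult_left_mono r1 policy_nn[OF p])
  then show "rp \<pi> s \<le> 1" using policy_sum[OF p] by simp
qed

lemma sd_nn: "is_policy \<pi> \<Longrightarrow> (\<And>x. 0 \<le> \<mu> x) \<Longrightarrow> 0 \<le> state_dist P \<pi> \<mu> n x"
proof (induction n arbitrary: x)
  case 0 then show ?case by simp
next
  case (Suc n) then show ?case unfolding sd_Suc by (intro sum_nonneg mult_nonneg_nonneg Pp_nn) auto
qed

lemma sd_sum: "is_policy \<pi> \<Longrightarrow> (\<Sum>x\<in>UNIV. state_dist P \<pi> \<mu> n x) = (\<Sum>x\<in>UNIV. \<mu> x)"
proof (induction n)
  case 0 then show ?case by simp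
next
  case (Suc n)
  have "(\<Sum>x\<in>UNIV. state_dist P \<pi> \<mu> (Suc n) x) = (\<Sum>s\<in>UNIV. state_dist P \<pi> \<mu> n s * (\<Sum>x\<in>UNIV. Pp \<pi> s x))"
    unfolding sd_Suc by (subst sum.swap) (simp add: sum_distrib_left)
  also have "\<dots> = (\<Sum>s\<in>UNIV. state_dist P \<pi> \<mu> n s)" using Pp_sum[OF Suc.prems] by simp
  finally show ?case using Suc by simp
qed

lemma sd_le1: "is_policy \<pi> \<Longrightarrow> is_dist \<mu> \<Longrightarrow> state_dist P \<pi> \<mu> n x \<le> 1"
proof -
  assume p: "is_policy \<pi>" and d: "is_dist \<mu>"
  have nn: "\<And>x. 0 \<le> \<mu> x" using d by (simp add: is_dist_def)
  have "state_dist P \<pi> \<mu> n x \<le> (\<Sum>y\<in>UNIV. state_dist P \<pi> \<mu> n y)"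
    by (rule member_le_sum) (auto intro: sd_nn[OF p nn])
  also have "\<dots> = 1" using sd_sum[OF p] d by (simp add: is_dist_def)
  finally show ?thesis .
qed

definition ind :: "'s \<Rightarrow> 's \<Rightarrow> real" where "ind s = (\<lambda>x. if x = s then 1 else 0)"

lemma ind_dist: "is_dist (ind s)"
  by (simp add: is_dist_def ind_def)

lemma sd_lin: "state_dist P \<pi> \<mu> n x = (\<Sum>y\<in>UNIV. \<mu> y * state_dist P \<pi> (ind y) n x)"
proof (induction n arbitrary: x)
  case 0
  have "(\<Sum>y\<in>UNIV. \<mu> y * state_dist P \<pi> (ind y) 0 x) = (\<Sum>y\<in>UNIV. if y = x then \<mu> y else 0)"
    by (rule sum.cong) (auto simp: ind_def)
  then show ?case by simp
next
  case (Suc n)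
  show ?case unfolding sd_Suc Suc
    by (simp add: sum_distrib_left sum_distrib_right mult.assoc) (rule sum.swap)
qed

lemma sd_shift: "state_dist P \<pi> \<mu> (Suc n) = state_dist P \<pi> (state_dist P \<pi> \<mu> 1) n"
proof (induction n)
  case 0 then show ?case by simp
next
  case (Suc n)
  show ?case by (subst state_dist.simps(2)) (simp only: Suc, simp)
qed

lemma sd_ind_Suc: "state_dist P \<pi> (ind s) (Suc n) x = (\<Sum>s'\<in>UNIV. Pp \<pi> s s' * state_dist P \<pi> (ind s') n x)"
proof -
  have "state_dist P \<pi> (ind s) 1 = Pp \<pi> s"
  proof
    fix x
    have "state_dist P \<pi> (ind s) (Suc 0) x = (\<Sum>y\<in>UNIV. if y = s then Pp \<pi> y x else 0)"
      unfolding sd_Suc state_dist.simps(1) by (rule sum.cong) (auto simp: ind_def)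
    then show "state_dist P \<pi> (ind s) 1 x = Pp \<pi> s x" by simp
  qed
  then show ?thesis by (subst sd_shift) (simp add: sd_lin[of _ "Pp \<pi> s"])
qed

end



context mdpl begin

definition fterm where "fterm \<pi> s t = (\<Sum>x\<in>UNIV. state_dist P \<pi> (ind s) t x * rp \<pi> x)"

lemma Vf_eq: "Vf P r \<gamma> \<pi> s = (\<Sum>t. \<gamma>^t * fterm \<pi> s t)"
  unfolding Vf_def fterm_def ind_def rp_def ..

lemma fterm_bounds: assumes p: "is_policy \<pi>" shows "0 \<le> fterm \<pi> s t" "fterm \<pi> s t \<le> 1"
proof -
  show "0 \<le> fterm \<pi> s t" unfolding fterm_def
    using rp_bounds[OF p] sd_nn[OF p] ind_dist by (intro sum_nonneg mult_nonneg_nonneg) (auto simp: is_dist_def)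
  have "fterm \<pi> s t \<le> (\<Sum>x\<in>UNIV. state_dist P \<pi> (ind s) t x * 1)" unfolding fterm_def
    using rp_bounds[OF p] sd_nn[OF p] ind_dist by (intro sum_mono mult_left_mono) (auto simp: is_dist_def)
  also have "\<dots> = 1" using sd_sum[OF p] ind_dist by (simp add: is_dist_def)
  finally show "fterm \<pi> s t \<le> 1" .
qed

lemma geo_summable: "summable (\<lambda>t. \<gamma>^t)" using g0 g1 by (simp add: summable_geometric)

lemma fterm_summable: assumes p: "is_policy \<pi>" shows "summable (\<lambda>t. \<gamma>^t * fterm \<pi> s t)"
proof (rule summable_comparison_test[OF _ geo_summable])
  show "\<exists>N. \<forall>n\<ge>N. norm (\<gamma> ^ n * fterm \<pi> s n) \<le> \<gamma> ^ n"
    using fterm_bounds[OF p] g0 by (auto intro!: exI[of _ 0] mult_left_le simp: abs_mult)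
qed

lemma fterm_0: "fterm \<pi> s 0 = rp \<pi> s"
proof -
  have "fterm \<pi> s 0 = (\<Sum>x\<in>UNIV. if x = s then rp \<pi> x else 0)"
    unfolding fterm_def by (rule sum.cong) (auto simp: ind_def)
  then show ?thesis by simp
qed

lemma fterm_Suc: "fterm \<pi> s (Suc t) = (\<Sum>s'\<in>UNIV. Pp \<pi> s s' * fterm \<pi> s' t)"
  unfolding fterm_def sd_ind_Suc
  by (simp add: sum_distrib_left sum_distrib_right mult.assoc) (rule sum.swap)

lemma Vf_bellman: assumes p: "is_policy \<pi>"
  shows "Vf P r \<gamma> \<pi> s = rp \<pi> s + \<gamma> * K \<pi> s (Vf P r \<gamma> \<pi>)"
proof -
  let ?g = "\<lambda>s t. \<gamma>^t * fterm \<pi> s t"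
  have sm: "\<And>s. summable (?g s)" by (rule fterm_summable[OF p])
  have "(\<Sum>t. ?g s (Suc t)) = (\<Sum>t. \<gamma> * (\<Sum>s'\<in>UNIV. Pp \<pi> s s' * ?g s' t))"
    by (simp add: fterm_Suc sum_distrib_left mult_ac)
  also have "\<dots> = \<gamma> * (\<Sum>t. (\<Sum>s'\<in>UNIV. Pp \<pi> s s' * ?g s' t))"
    by (rule suminf_mult) (intro summable_sum summable_mult sm)
  also have "(\<Sum>t. (\<Sum>s'\<in>UNIV. Pp \<pi> s s' * ?g s' t)) = (\<Sum>s'\<in>UNIV. (\<Sum>t. Pp \<pi> s s' * ?g s' t))"
    by (rule suminf_sum) (intro summable_mult sm)
  also have "\<dots> = (\<Sum>s'\<in>UNIV. Pp \<pi> s s' * (\<Sum>t. ?g s' t))"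
    by (intro sum.cong refl suminf_mult sm)
  finally have "(\<Sum>t. ?g s (Suc t)) = \<gamma> * (\<Sum>s'\<in>UNIV. Pp \<pi> s s' * Vf P r \<gamma> \<pi> s')"
    by (simp add: Vf_eq)
  moreover have "(\<Sum>t. ?g s (Suc t)) = Vf P r \<gamma> \<pi> s - ?g s 0"
    unfolding Vf_eq by (rule suminf_split_head[OF sm])
  ultimately show ?thesis by (simp add: fterm_0 K_Pp)
qed

lemma Vf_bounds: assumes p: "is_policy \<pi>"
  shows "0 \<le> Vf P r \<gamma> \<pi> s" "Vf P r \<gamma> \<pi> s \<le> 1 / (1 - \<gamma>)"
proof -
  show "0 \<le> Vf P r \<gamma> \<pi> s" unfolding Vf_eq
    using fterm_bounds[OF p] g0 by (intro suminf_nonneg fterm_summable[OF p]) auto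
  have "Vf P r \<gamma> \<pi> s \<le> (\<Sum>t. \<gamma>^t)" unfolding Vf_eq
    using fterm_bounds[OF p] g0 by (intro suminf_le fterm_summable[OF p] geo_summable) (auto intro: mult_left_le)
  also have "\<dots> = 1 / (1 - \<gamma>)" using g0 g1 by (simp add: suminf_geometric)
  finally show "Vf P r \<gamma> \<pi> s \<le> 1 / (1 - \<gamma>)" .
qed

lemma K_const: "is_policy \<pi> \<Longrightarrow> K \<pi> s (\<lambda>_. c) = c"
proof -
  assume p: "is_policy \<pi>"
  have "K \<pi> s (\<lambda>_. c) = (\<Sum>a\<in>UNIV. \<pi> s a) * c" unfolding K_def
    by (simp add: Psum sum_distrib_right flip: sum_distrib_right[of "P s _" UNIV c])
  then show ?thesis using policy_sum[OF p] by simp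
qed

lemma K_mono: "is_policy \<pi> \<Longrightarrow> (\<And>x. D x \<le> E x) \<Longrightarrow> K \<pi> s D \<le> K \<pi> s E"
  unfolding K_def by (intro sum_mono mult_left_mono Pnn policy_nn) auto

lemma K_diff: "K \<pi> s (\<lambda>x. D x - E x) = K \<pi> s D - K \<pi> s E"
  unfolding K_def by (simp add: algebra_simps sum_subtractf)

lemma K_neg: "K \<pi> s (\<lambda>x. - D x) = - K \<pi> s D"
  unfolding K_def by (simp add: sum_negf)

lemma cmp:
  assumes p: "is_policy \<pi>" and h: "\<And>s. D s \<le> B s + \<gamma> * K \<pi> s D" and b: "\<And>s. B s \<le> c"
  shows "D s \<le> c / (1 - \<gamma>)"
proof -
  define M where "M = Max (range D)"
  have DM: "\<And>x. D x \<le> M" unfolding M_def by simp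
  have "\<And>x. D x \<le> c + \<gamma> * M"
  proof -
    fix x
    have "K \<pi> x D \<le> K \<pi> x (\<lambda>_. M)" by (rule K_mono[OF p DM])
    then have "K \<pi> x D \<le> M" by (simp add: K_const[OF p])
    then have "\<gamma> * K \<pi> x D \<le> \<gamma> * M" using g0 by (rule mult_left_mono)
    then show "D x \<le> c + \<gamma> * M" using h[of x] b[of x] by linarith
  qed
  moreover have "M \<in> range D" unfolding M_def by (rule Max_in) auto
  ultimately have "M \<le> c + \<gamma> * M" by auto
  then have "(1 - \<gamma>) * M \<le> c" by (simp add: algebra_simps)
  then have "M \<le> c / (1 - \<gamma>)" using g1 by (simp add: field_simps mult.commute)
  then show ?thesis using DM[of s] by linarith
qed

lemma supersol:
  assumes p: "is_policy \<pi>" and h: "\<And>s. rp \<pi> s + \<gamma> * K \<pi> s W \<le> W s"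
  shows "Vf P r \<gamma> \<pi> s \<le> W s"
proof -
  let ?D = "\<lambda>x. Vf P r \<gamma> \<pi> x - W x"
  have "?D s \<le> 0 / (1 - \<gamma>)"
  proof (rule cmp[OF p, where B = "\<lambda>_. 0"])
    fix s
    show "?D s \<le> 0 + \<gamma> * K \<pi> s ?D"
      using h[of s] Vf_bellman[OF p, of s] by (simp add: K_diff algebra_simps)
  qed simp
  then show ?thesis by simp
qed

lemma subsol:
  assumes p: "is_policy \<pi>" and h: "\<And>s. W s \<le> rp \<pi> s + \<gamma> * K \<pi> s W"
  shows "W s \<le> Vf P r \<gamma> \<pi> s"
proof -
  let ?D = "\<lambda>x. W x - Vf P r \<gamma> \<pi> x"
  have "?D s \<le> 0 / (1 - \<gamma>)"
  proof (rule cmp[OF p, where B = "\<lambda>_. 0"])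
    fix s
    show "?D s \<le> 0 + \<gamma> * K \<pi> s ?D"
      using h[of s] Vf_bellman[OF p, of s] by (simp add: K_diff algebra_simps)
  qed simp
  then show ?thesis by simp
qed

lemma Q_expand: assumes p: "is_policy \<pi>"
  shows "(\<Sum>a\<in>UNIV. \<pi> s a * Qf P r \<gamma> \<pi>' s a) = rp \<pi> s + \<gamma> * K \<pi> s (Vf P r \<gamma> \<pi>')"
  unfolding Qf_def rp_def K_def by (simp add: algebra_simps sum.distrib sum_distrib_left)

lemma V_Q: assumes p: "is_policy \<pi>"
  shows "Vf P r \<gamma> \<pi> s = (\<Sum>a\<in>UNIV. \<pi> s a * Qf P r \<gamma> \<pi> s a)"
  using Vf_bellman[OF p] Q_expand[OF p] by simp

lemma sum_U: assumes p: "is_policy \<pi>"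
  shows "(\<Sum>a\<in>UNIV. \<pi> s a * Uf P r \<gamma> \<pi> s a) = 0"
proof -
  have "(\<Sum>a\<in>UNIV. \<pi> s a * Uf P r \<gamma> \<pi> s a) = (\<Sum>a\<in>UNIV. \<pi> s a * Qf P r \<gamma> \<pi> s a) - (\<Sum>a\<in>UNIV. \<pi> s a) * Vf P r \<gamma> \<pi> s"
    unfolding Uf_def by (simp add: algebra_simps sum_subtractf sum_distrib_right)
  then show ?thesis using V_Q[OF p] policy_sum[OF p] by simp
qed

lemma Q_bounds: assumes p: "is_policy \<pi>"
  shows "0 \<le> Qf P r \<gamma> \<pi> s a" "Qf P r \<gamma> \<pi> s a \<le> 1 / (1 - \<gamma>)"
proof -
  have s0: "0 \<le> (\<Sum>s'\<in>UNIV. P s a s' * Vf P r \<gamma> \<pi> s')"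
    using Vf_bounds[OF p] Pnn by (intro sum_nonneg mult_nonneg_nonneg) auto
  have "(\<Sum>s'\<in>UNIV. P s a s' * Vf P r \<gamma> \<pi> s') \<le> (\<Sum>s'\<in>UNIV. P s a s' * (1 / (1 - \<gamma>)))"
    using Vf_bounds[OF p] Pnn by (intro sum_mono mult_left_mono) auto
  also have "\<dots> = (\<Sum>s'\<in>UNIV. P s a s') * (1 / (1 - \<gamma>))" by (simp add: sum_distrib_right sum_divide_distrib)
  also have "\<dots> = 1 / (1 - \<gamma>)" using Psum by simp
  finally have s1: "(\<Sum>s'\<in>UNIV. P s a s' * Vf P r \<gamma> \<pi> s') \<le> 1 / (1 - \<gamma>)" .
  show "0 \<le> Qf P r \<gamma> \<pi> s a" unfolding Qf_def using s0 r0 g0 by simp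
  have "Qf P r \<gamma> \<pi> s a \<le> 1 + \<gamma> * (1 / (1 - \<gamma>))" unfolding Qf_def
    using r1[of s a] mult_left_mono[OF s1 g0] by linarith
  also have "\<dots> = 1 / (1 - \<gamma>)" using g1 by (simp add: field_simps)
  finally show "Qf P r \<gamma> \<pi> s a \<le> 1 / (1 - \<gamma>)" .
qed

lemma U_bounds: assumes p: "is_policy \<pi>"
  shows "\<bar>Uf P r \<gamma> \<pi> s a\<bar> \<le> 1 / (1 - \<gamma>)"
  using Q_bounds[OF p, of s a] Vf_bounds[OF p, of s] unfolding Uf_def by linarith

end



context mdpl begin

lemma improve_eq:
  assumes p: "is_policy \<pi>" and p': "is_policy \<pi>'"
  shows "Vf P r \<gamma> \<pi>' s - Vf P r \<gamma> \<pi> s = (\<Sum>a\<in>UNIV. \<pi>' s a * Uf P r \<gamma> \<pi> s a)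
      + \<gamma> * K \<pi>' s (\<lambda>x. Vf P r \<gamma> \<pi>' x - Vf P r \<gamma> \<pi> x)"
proof -
  have "(\<Sum>a\<in>UNIV. \<pi>' s a * Uf P r \<gamma> \<pi> s a) = (\<Sum>a\<in>UNIV. \<pi>' s a * Qf P r \<gamma> \<pi> s a) - (\<Sum>a\<in>UNIV. \<pi>' s a) * Vf P r \<gamma> \<pi> s"
    unfolding Uf_def by (simp add: algebra_simps sum_subtractf sum_distrib_right)
  then have "(\<Sum>a\<in>UNIV. \<pi>' s a * Uf P r \<gamma> \<pi> s a) = rp \<pi>' s + \<gamma> * K \<pi>' s (Vf P r \<gamma> \<pi>) - Vf P r \<gamma> \<pi> s"
    using Q_expand[OF p'] policy_sum[OF p'] by simp
  then show ?thesis using Vf_bellman[OF p', of s] by (simp add: K_diff algebra_simps)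
qed

lemma improve_ge:
  assumes p: "is_policy \<pi>" and p': "is_policy \<pi>'"
    and A: "\<And>s. 0 \<le> (\<Sum>a\<in>UNIV. \<pi>' s a * Uf P r \<gamma> \<pi> s a)"
  shows "(\<Sum>a\<in>UNIV. \<pi>' s a * Uf P r \<gamma> \<pi> s a) \<le> Vf P r \<gamma> \<pi>' s - Vf P r \<gamma> \<pi> s"
    and "0 \<le> Vf P r \<gamma> \<pi>' s - Vf P r \<gamma> \<pi> s"
proof -
  let ?D = "\<lambda>x. Vf P r \<gamma> \<pi>' x - Vf P r \<gamma> \<pi> x"
  let ?A = "\<lambda>s. (\<Sum>a\<in>UNIV. \<pi>' s a * Uf P r \<gamma> \<pi> s a)"
  have nD: "- ?D x \<le> 0" for x
  proof -
    have "- ?D x \<le> 0 / (1 - \<gamma>)"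
    proof (rule cmp[OF p', where B = "\<lambda>s. - ?A s"])
      fix s show "- ?D s \<le> - ?A s + \<gamma> * K \<pi>' s (\<lambda>x. - ?D x)"
        using improve_eq[OF p p', of s] unfolding K_neg by (simp add: algebra_simps)
    qed (use A in auto)
    then show ?thesis by simp
  qed
  have "K \<pi>' s (\<lambda>_. 0) \<le> K \<pi>' s ?D" by (rule K_mono[OF p']) (use nD in auto)
  then have "0 \<le> K \<pi>' s ?D" by (simp add: K_const[OF p'])
  then show "?A s \<le> ?D s" using improve_eq[OF p p', of s] g0 by (simp add: mult_nonneg_nonneg)
  show "0 \<le> ?D s" using nD[of s] by simp
qed

lemma pdl_visit:
  assumes p: "is_policy \<pi>" and p': "is_policy \<pi>'" and rho: "is_dist \<rho>"
    and A: "\<And>s. 0 \<le> (\<Sum>a\<in>UNIV. \<pi>' s a * Uf P r \<gamma> \<pi> s a)"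
  shows "(\<Sum>s\<in>UNIV. visit P \<gamma> \<rho> \<pi>' s * (\<Sum>a\<in>UNIV. \<pi>' s a * Uf P r \<gamma> \<pi> s a))
     \<le> (1 - \<gamma>) * (\<Sum>s\<in>UNIV. \<rho> s * (Vf P r \<gamma> \<pi>' s - Vf P r \<gamma> \<pi> s))"
proof -
  let ?D = "\<lambda>x. Vf P r \<gamma> \<pi>' x - Vf P r \<gamma> \<pi> x"
  let ?A = "\<lambda>s. (\<Sum>a\<in>UNIV. \<pi>' s a * Uf P r \<gamma> \<pi> s a)"
  let ?mu = "state_dist P \<pi>' \<rho>"
  have rnn: "\<And>x. 0 \<le> \<rho> x" using rho by (simp add: is_dist_def)
  have mnn: "\<And>n x. 0 \<le> ?mu n x" by (rule sd_nn[OF p' rnn])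
  have mle: "\<And>n x. ?mu n x \<le> 1" by (rule sd_le1[OF p' rho])
  have Dnn: "\<And>x. 0 \<le> ?D x" by (rule improve_ge(2)[OF p p' A])
  have tele: "(\<Sum>x\<in>UNIV. \<rho> x * ?D x) = (\<Sum>k<n. \<gamma>^k * (\<Sum>x\<in>UNIV. ?mu k x * ?A x)) + \<gamma>^n * (\<Sum>x\<in>UNIV. ?mu n x * ?D x)" for n
  proof (induction n)
    case 0 then show ?case by simp
  next
    case (Suc n)
    have "(\<Sum>x\<in>UNIV. ?mu n x * ?D x) = (\<Sum>x\<in>UNIV. ?mu n x * ?A x) + \<gamma> * (\<Sum>x\<in>UNIV. ?mu n x * K \<pi>' x ?D)"
      by (subst improve_eq[OF p p']) (simp add: algebra_simps sum.distrib sum_distrib_left)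
    also have "(\<Sum>x\<in>UNIV. ?mu n x * K \<pi>' x ?D) = (\<Sum>x\<in>UNIV. ?mu (Suc n) x * ?D x)"
      by (rule sd_dot_Suc[symmetric])
    finally show ?case using Suc by (simp add: algebra_simps)
  qed
  let ?f = "\<lambda>x k. \<gamma>^k * ?mu k x * ?A x"
  have fsum: "summable (?f x)" for x
  proof (rule summable_comparison_test[OF _ summable_mult2[OF geo_summable, of "?A x"]])
    have "norm (?f x n) \<le> \<gamma>^n * ?A x" for n
    proof -
      have "?mu n x * ?A x \<le> ?A x" using mnn mle A by (intro mult_left_le_one_le) auto
      then have "\<gamma>^n * (?mu n x * ?A x) \<le> \<gamma>^n * ?A x" using g0 by (intro mult_left_mono) auto
      moreover have "0 \<le> ?f x n" using mnn A g0 by auto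
      ultimately show ?thesis by (simp add: mult.assoc)
    qed
    then show "\<exists>N. \<forall>n\<ge>N. norm (?f x n) \<le> \<gamma>^n * ?A x" by auto
  qed
  have eq: "(\<lambda>k. \<gamma>^k * (\<Sum>x\<in>UNIV. ?mu k x * ?A x)) = (\<lambda>k. \<Sum>x\<in>UNIV. ?f x k)"
    by (simp add: sum_distrib_left mult.assoc)
  have sm: "summable (\<lambda>k. \<gamma>^k * (\<Sum>x\<in>UNIV. ?mu k x * ?A x))"
    unfolding eq by (intro summable_sum fsum)
  have "(\<Sum>k. \<gamma>^k * (\<Sum>x\<in>UNIV. ?mu k x * ?A x)) \<le> (\<Sum>x\<in>UNIV. \<rho> x * ?D x)"
  proof (rule suminf_le_const[OF sm])
    fix n
    have "0 \<le> \<gamma>^n * (\<Sum>x\<in>UNIV. ?mu n x * ?D x)"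
      using g0 mnn Dnn by (intro mult_nonneg_nonneg sum_nonneg) auto
    then show "(\<Sum>k<n. \<gamma>^k * (\<Sum>x\<in>UNIV. ?mu k x * ?A x)) \<le> (\<Sum>x\<in>UNIV. \<rho> x * ?D x)"
      using tele[of n] by linarith
  qed
  also have "(\<Sum>k. \<gamma>^k * (\<Sum>x\<in>UNIV. ?mu k x * ?A x)) = (\<Sum>x\<in>UNIV. (\<Sum>k. ?f x k))"
    unfolding eq by (rule suminf_sum) (rule fsum)
  also have "(\<Sum>x\<in>UNIV. (\<Sum>k. ?f x k)) = (\<Sum>x\<in>UNIV. (\<Sum>k. \<gamma>^k * ?mu k x) * ?A x)"
  proof (rule sum.cong[OF refl])
    fix x
    have "summable (\<lambda>k. \<gamma>^k * ?mu k x)"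
    proof (rule summable_comparison_test[OF _ geo_summable])
      show "\<exists>N. \<forall>n\<ge>N. norm (\<gamma>^n * ?mu n x) \<le> \<gamma>^n"
        using mnn mle g0 by (auto intro!: exI[of _ 0] mult_left_le simp: abs_mult)
    qed
    then show "(\<Sum>k. ?f x k) = (\<Sum>k. \<gamma>^k * ?mu k x) * ?A x" by (rule suminf_mult2[symmetric])
  qed
  finally have "(\<Sum>x\<in>UNIV. (\<Sum>k. \<gamma>^k * ?mu k x) * ?A x) \<le> (\<Sum>x\<in>UNIV. \<rho> x * ?D x)" .
  then have "(1 - \<gamma>) * (\<Sum>x\<in>UNIV. (\<Sum>k. \<gamma>^k * ?mu k x) * ?A x) \<le> (1 - \<gamma>) * (\<Sum>x\<in>UNIV. \<rho> x * ?D x)"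
    using g1 by (intro mult_left_mono) auto
  then show ?thesis unfolding visit_def by (simp add: sum_distrib_left mult.assoc)
qed

end



locale setting = mdpl P r \<gamma> for P :: "'s::finite \<Rightarrow> 'a::finite \<Rightarrow> 's \<Rightarrow> real" and r \<gamma> +
  fixes \<pi>s :: "'s \<Rightarrow> 'a \<Rightarrow> real"
  assumes opt: "optimal_policy P r \<gamma> \<pi>s"
    and uniq: "\<And>\<pi>. optimal_policy P r \<gamma> \<pi> \<Longrightarrow> \<pi> = \<pi>s"
begin

abbreviation "Vs \<equiv> Vf P r \<gamma> \<pi>s"
abbreviation "Qs \<equiv> Qf P r \<gamma> \<pi>s"

lemma ps: "is_policy \<pi>s" using opt by (simp add: optimal_policy_def)

lemma V_le_opt: "is_policy \<pi> \<Longrightarrow> Vf P r \<gamma> \<pi> s \<le> Vs s"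
  using opt by (simp add: optimal_policy_def)

definition det :: "('s \<Rightarrow> 'a) \<Rightarrow> 's \<Rightarrow> 'a \<Rightarrow> real" where
  "det f = (\<lambda>s a. if a = f s then 1 else 0)"

lemma det_policy: "is_policy (det f)"
  by (simp add: is_policy_def is_dist_def det_def)

lemma det_sum: "(\<Sum>a\<in>UNIV. det f s a * g a) = g (f s)"
proof -
  have "(\<Sum>a\<in>UNIV. det f s a * g a) = (\<Sum>a\<in>UNIV. if a = f s then g a else 0)"
    by (rule sum.cong) (auto simp: det_def)
  then show ?thesis by simp
qed

lemma Q_le_V: "Qs s a \<le> Vs s"
proof (rule ccontr)
  assume c: "\<not> Qs s a \<le> Vs s"
  define \<pi>' where "\<pi>' = \<pi>s(s := (\<lambda>b. if b = a then 1 else 0))"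
  have p': "is_policy \<pi>'" using ps unfolding \<pi>'_def by (simp add: is_policy_def is_dist_def)
  have A: "(\<Sum>b\<in>UNIV. \<pi>' x b * Uf P r \<gamma> \<pi>s x b) = (if x = s then Uf P r \<gamma> \<pi>s s a else 0)" for x
  proof (cases "x = s")
    case True
    have "(\<Sum>b\<in>UNIV. \<pi>' x b * Uf P r \<gamma> \<pi>s x b) = (\<Sum>b\<in>UNIV. if b = a then Uf P r \<gamma> \<pi>s s b else 0)"
      using True by (intro sum.cong) (auto simp: \<pi>'_def)
    then show ?thesis using True by simp
  next
    case False
    then show ?thesis using sum_U[OF ps, of x] by (simp add: \<pi>'_def)
  qed
  have U: "0 < Uf P r \<gamma> \<pi>s s a" using c by (simp add: Uf_def)
  have "(\<Sum>b\<in>UNIV. \<pi>' s b * Uf P r \<gamma> \<pi>s s b) \<le> Vf P r \<gamma> \<pi>' s - Vs s"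
    by (rule improve_ge(1)[OF ps p']) (use A U in auto)
  then have "Vs s < Vf P r \<gamma> \<pi>' s" using A[of s] U by simp
  then show False using V_le_opt[OF p'] by (simp add: not_le[symmetric])
qed

lemma greedy_ex: "\<exists>a. Qs s a = Vs s"
proof (rule ccontr)
  assume "\<not> ?thesis"
  then have lt: "\<And>a. Qs s a < Vs s" using Q_le_V by (simp add: order_less_le)
  have "(\<Sum>a\<in>UNIV. \<pi>s s a * (Vs s - Qs s a)) = (\<Sum>a\<in>UNIV. \<pi>s s a) * Vs s - (\<Sum>a\<in>UNIV. \<pi>s s a * Qs s a)"
    by (simp add: algebra_simps sum_subtractf sum_distrib_right)
  also have "\<dots> = 0" using V_Q[OF ps, of s] policy_sum[OF ps] by simp
  finally have z: "(\<Sum>a\<in>UNIV. \<pi>s s a * (Vs s - Qs s a)) = 0" .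
  have "\<forall>a\<in>UNIV. \<pi>s s a * (Vs s - Qs s a) = 0"
    using z by (subst sum_nonneg_eq_0_iff[symmetric]) (use policy_nn[OF ps] lt in \<open>auto intro!: mult_nonneg_nonneg simp: less_imp_le\<close>)
  then have "\<pi>s s a = 0" for a using lt[of a] by auto
  then show False using policy_sum[OF ps, of s] by simp
qed

definition astar :: "'s \<Rightarrow> 'a" where "astar s = (SOME a. Qs s a = Vs s)"

lemma astar: "Qs s (astar s) = Vs s"
  unfolding astar_def using greedy_ex by (rule someI_ex)

lemma det_opt: assumes f: "\<And>s. Qs s (f s) = Vs s" shows "det f = \<pi>s"
proof -
  have fx: "rp (det f) x + \<gamma> * K (det f) x Vs = Vs x" for x
    using Q_expand[OF det_policy[of f], of x \<pi>s] det_sum[of f x "Qs x"] f[of x] by simp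
  have "Vf P r \<gamma> (det f) x = Vs x" for x
    using supersol[OF det_policy[of f], of Vs x] subsol[OF det_policy[of f], of Vs x] fx by simp
  then have "optimal_policy P r \<gamma> (det f)"
    using det_policy V_le_opt by (simp add: optimal_policy_def)
  then show ?thesis by (rule uniq)
qed

lemma strict: assumes b: "b \<noteq> astar s" shows "Qs s b < Vs s"
proof (rule ccontr)
  assume "\<not> Qs s b < Vs s"
  then have eq: "Qs s b = Vs s" using Q_le_V[of s b] by simp
  have "det astar = \<pi>s" by (rule det_opt[OF astar])
  moreover have "det (astar(s := b)) = \<pi>s" by (rule det_opt) (use astar eq in auto)
  ultimately have "det astar s b = det (astar(s := b)) s b" by simp
  then show False using b by (simp add: det_def)
qed

end



locale dyn = setting P r \<gamma> \<pi>s for P :: "'s::finite \<Rightarrow> 'a::finite \<Rightarrow> 's \<Rightarrow> real" and r \<gamma> \<pi>s +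
  fixes \<eta> \<alpha> :: real and \<pi>0 :: "'s \<Rightarrow> 'a \<Rightarrow> real"
  assumes eta: "\<eta> > 0" and alpha: "\<alpha> > 0" and init: "full_support \<pi>0"
begin

definition pit :: "nat \<Rightarrow> 's \<Rightarrow> 'a \<Rightarrow> real" where "pit t = dg_iter P r \<gamma> \<eta> \<alpha> \<pi>0 t"
definition U :: "nat \<Rightarrow> 's \<Rightarrow> 'a \<Rightarrow> real" where "U t = Uf P r \<gamma> (pit t)"
definition g :: "nat \<Rightarrow> 's \<Rightarrow> 'a \<Rightarrow> real" where "g t s a = \<alpha> * wf P r \<gamma> \<eta> (pit t) s a * U t s a"
definition Z :: "nat \<Rightarrow> 's \<Rightarrow> real" where "Z t s = (\<Sum>a\<in>UNIV. pit t s a * exp (g t s a))"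
definition Vt :: "nat \<Rightarrow> 's \<Rightarrow> real" where "Vt t = Vf P r \<gamma> (pit t)"
definition I :: "nat \<Rightarrow> 's \<Rightarrow> real" where "I t s = (\<Sum>a\<in>UNIV. pit (Suc t) s a * U t s a)"

lemma pit_0: "pit 0 = \<pi>0" by (simp add: pit_def dg_iter_def)

lemma pit_Suc: "pit (Suc t) s a = pit t s a * exp (g t s a) / Z t s"
  by (simp add: pit_def dg_iter_def dg_step_def g_def Z_def U_def)

lemma fs_Suc: assumes fs: "full_support (pit t)" shows "full_support (pit (Suc t))"
proof -
  have pos: "\<And>s a. 0 < pit t s a" using fs by (simp add: full_support_def)
  have Zp: "0 < Z t s" for s
  proof -
    have "0 < (\<Sum>a\<in>UNIV. pit t s a * exp (g t s a))"
      by (rule sum_pos) (auto intro!: mult_pos_pos pos)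
    then show ?thesis by (simp add: Z_def)
  qed
  have "(\<Sum>a\<in>UNIV. pit (Suc t) s a) = 1" for s
    using Zp[of s] by (simp add: pit_Suc Z_def flip: sum_divide_distrib)
  moreover have "0 < pit (Suc t) s a" for s a using Zp[of s] pos[of s a] by (simp add: pit_Suc)
  ultimately show ?thesis by (simp add: full_support_def is_policy_def is_dist_def less_imp_le)
qed

lemma fs: "full_support (pit t)"
  by (induction t) (auto simp: pit_0 init fs_Suc)

lemma pol: "is_policy (pit t)" using fs by (simp add: full_support_def)
lemma pos: "0 < pit t s a" using fs by (simp add: full_support_def)
lemma le1: "pit t s a \<le> 1"
proof -
  have "pit t s a \<le> (\<Sum>b\<in>UNIV. pit t s b)" by (rule member_le_sum) (auto intro: less_imp_le pos)
  then show ?thesis using policy_sum[OF pol] by simp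
qed

lemma Zpos: "0 < Z t s" unfolding Z_def by (rule sum_pos) (auto intro!: mult_pos_pos pos)

lemma sig_bounds: "0 < sigmoid x" "sigmoid x < 1"
proof -
  have e: "0 < exp (- x)" "0 < 1 + exp (- x)" by (simp, smt (verit) exp_gt_zero)
  show "0 < sigmoid x" unfolding sigmoid_def using e by simp
  show "sigmoid x < 1" unfolding sigmoid_def using e by (simp add: divide_less_eq)
qed

lemma sig_half: "0 \<le> x \<Longrightarrow> 1/2 \<le> sigmoid x"
proof -
  assume x: "0 \<le> x"
  have e: "exp (- x) \<le> 1" "0 < exp (- x)" "0 < 1 + exp (- x)" using x by (auto, smt (verit) exp_gt_zero)
  then show ?thesis unfolding sigmoid_def by (simp add: le_divide_eq)
qed

lemma w_bounds: "0 < wf P r \<gamma> \<eta> (pit t) s a" "wf P r \<gamma> \<eta> (pit t) s a < 1"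
  unfolding wf_def by (rule sig_bounds)+

lemma w_half: assumes "0 \<le> U t s a" shows "1/2 \<le> wf P r \<gamma> \<eta> (pit t) s a"
proof -
  have "0 \<le> - ln (pit t s a)" using pos le1 by simp
  then have "0 \<le> U t s a * (- ln (pit t s a)) / \<eta>" using assms eta by (intro divide_nonneg_pos mult_nonneg_nonneg) auto
  then show ?thesis unfolding wf_def U_def[symmetric] by (rule sig_half)
qed

lemma g_sign: "0 < U t s a \<Longrightarrow> 0 < g t s a" "U t s a < 0 \<Longrightarrow> g t s a < 0" "0 \<le> U t s a \<Longrightarrow> 0 \<le> g t s a"
  using w_bounds(1)[of t s a] alpha by (auto simp: g_def mult_pos_neg)

lemma g_le: "g t s a \<le> \<alpha> * max (U t s a) 0"
proof (cases "0 \<le> U t s a")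
  case True
  then have "wf P r \<gamma> \<eta> (pit t) s a * U t s a \<le> 1 * U t s a"
    using w_bounds(2)[of t s a] by (intro mult_right_mono) auto
  then show ?thesis using alpha True by (simp add: g_def mult.assoc)
next
  case False
  then show ?thesis using g_sign(2)[of t s a] alpha by simp
qed

lemma g_ge_half: assumes "0 \<le> U t s a" shows "\<alpha> * U t s a / 2 \<le> g t s a"
proof -
  have "1/2 * U t s a \<le> wf P r \<gamma> \<eta> (pit t) s a * U t s a"
    using w_half[OF assms] assms by (intro mult_right_mono) auto
  then show ?thesis using alpha by (simp add: g_def mult.assoc)
qed

lemma eg_nn: "0 \<le> (exp (g t s a) - 1) * U t s a"
proof (cases "0 \<le> U t s a")
  case True then show ?thesis using g_sign(3)[of t s a] by simp
next
  case False
  then have "g t s a < 0" using g_sign(2) by simp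
  then show ?thesis using False by (intro mult_nonpos_nonpos) auto
qed

lemma eg_lb: assumes "0 \<le> U t s a" shows "\<alpha> * (U t s a)^2 / 2 \<le> (exp (g t s a) - 1) * U t s a"
proof -
  have "\<alpha> * U t s a / 2 \<le> exp (g t s a) - 1"
    using g_ge_half[OF assms] exp_ge_add_one_self[of "g t s a"] by linarith
  then have "\<alpha> * U t s a / 2 * U t s a \<le> (exp (g t s a) - 1) * U t s a"
    using assms by (rule mult_right_mono)
  then show ?thesis by (simp add: power2_eq_square)
qed

definition Zm where "Zm = exp (\<alpha> / (1 - \<gamma>))"

lemma Zm_pos: "0 < Zm" by (simp add: Zm_def)

lemma Z_le: "Z t s \<le> Zm"
proof -
  have "g t s a \<le> \<alpha> / (1 - \<gamma>)" for a
  proof -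
    have "max (U t s a) 0 \<le> 1 / (1 - \<gamma>)" using U_bounds[OF pol, of t s a] g1 by (auto simp: U_def)
    then have "\<alpha> * max (U t s a) 0 \<le> \<alpha> * (1 / (1 - \<gamma>))" using alpha by (intro mult_left_mono) auto
    then show ?thesis using g_le[of t s a] by simp
  qed
  then have "Z t s \<le> (\<Sum>a\<in>UNIV. pit t s a * Zm)" unfolding Z_def Zm_def
    by (intro sum_mono mult_left_mono) (auto intro: less_imp_le pos)
  also have "\<dots> = Zm" using policy_sum[OF pol] by (simp flip: sum_distrib_right)
  finally show ?thesis .
qed

lemma sumU: "(\<Sum>a\<in>UNIV. pit t s a * U t s a) = 0"
  unfolding U_def by (rule sum_U[OF pol])

lemma I_eq: "I t s = (\<Sum>a\<in>UNIV. pit t s a * ((exp (g t s a) - 1) * U t s a)) / Z t s"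
proof -
  have "I t s = (\<Sum>a\<in>UNIV. pit t s a * exp (g t s a) * U t s a) / Z t s"
    unfolding I_def pit_Suc by (simp add: sum_divide_distrib)
  also have "(\<Sum>a\<in>UNIV. pit t s a * exp (g t s a) * U t s a)
      = (\<Sum>a\<in>UNIV. pit t s a * ((exp (g t s a) - 1) * U t s a)) + (\<Sum>a\<in>UNIV. pit t s a * U t s a)"
    by (simp add: algebra_simps sum.distrib[symmetric])
  finally show ?thesis using sumU by simp
qed

lemma I_lb: "pit t s a * ((exp (g t s a) - 1) * U t s a) / Zm \<le> I t s"
proof -
  have nn: "\<And>b. 0 \<le> pit t s b * ((exp (g t s b) - 1) * U t s b)"
    by (intro mult_nonneg_nonneg less_imp_le[OF pos] eg_nn)
  have "pit t s a * ((exp (g t s a) - 1) * U t s a) \<le> (\<Sum>b\<in>UNIV. pit t s b * ((exp (g t s b) - 1) * U t s b))"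
    by (rule member_le_sum) (use nn in auto)
  then have "pit t s a * ((exp (g t s a) - 1) * U t s a) / Zm \<le> (\<Sum>b\<in>UNIV. pit t s b * ((exp (g t s b) - 1) * U t s b)) / Zm"
    using Zm_pos by (simp add: divide_right_mono)
  also have "\<dots> \<le> (\<Sum>b\<in>UNIV. pit t s b * ((exp (g t s b) - 1) * U t s b)) / Z t s"
    using Zpos[of t s] Z_le[of t s] Zm_pos by (intro divide_left_mono sum_nonneg nn) auto
  finally show ?thesis by (simp add: I_eq)
qed

lemma I_nn: "0 \<le> I t s"
  using I_lb[of t s undefined] eg_nn[of t s undefined] pos[of t s undefined] Zm_pos
  by (smt (verit) divide_nonneg_pos mult_nonneg_nonneg)

lemma I_improve: "I t s \<le> Vt (Suc t) s - Vt t s" "Vt t s \<le> Vt (Suc t) s"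
  using improve_ge[OF pol[of t] pol[of "Suc t"], of s] I_nn
  unfolding I_def Vt_def U_def by auto

lemma Vt_mono: "incseq (\<lambda>t. Vt t s)"
  by (rule incseq_SucI) (rule I_improve(2))

lemma Vt_le: "Vt t s \<le> Vs s" unfolding Vt_def by (rule V_le_opt[OF pol])

end



context dyn begin

definition Vinf :: "'s \<Rightarrow> real" where "Vinf s = (SUP t. Vt t s)"
definition Qinf :: "'s \<Rightarrow> 'a \<Rightarrow> real" where "Qinf s a = r s a + \<gamma> * (\<Sum>s'\<in>UNIV. P s a s' * Vinf s')"
definition Uinf :: "'s \<Rightarrow> 'a \<Rightarrow> real" where "Uinf s a = Qinf s a - Vinf s"

lemma Vt_lim: "(\<lambda>t. Vt t s) \<longlonglongrightarrow> Vinf s"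
  unfolding Vinf_def
  by (rule LIMSEQ_incseq_SUP[OF _ Vt_mono]) (auto intro: bdd_aboveI2[where M = "Vs s"] Vt_le)

lemma U_expand: "U t s a = r s a + \<gamma> * (\<Sum>s'\<in>UNIV. P s a s' * Vt t s') - Vt t s"
  by (simp add: U_def Uf_def Qf_def Vt_def)

lemma U_lim: "(\<lambda>t. U t s a) \<longlonglongrightarrow> Uinf s a"
  unfolding U_expand Uinf_def Qinf_def by (intro tendsto_intros Vt_lim)

lemma I_lim: "(\<lambda>t. I t s) \<longlonglongrightarrow> 0"
proof (rule tendsto_sandwich[where f = "\<lambda>_. 0" and h = "\<lambda>t. Vt (Suc t) s - Vt t s"])
  show "eventually (\<lambda>t. 0 \<le> I t s) sequentially" using I_nn by simp
  show "eventually (\<lambda>t. I t s \<le> Vt (Suc t) s - Vt t s) sequentially" using I_improve(1) by simp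
  show "(\<lambda>t. 0) \<longlonglongrightarrow> (0::real)" by simp
  have "(\<lambda>t. Vt (Suc t) s - Vt t s) \<longlonglongrightarrow> Vinf s - Vinf s"
    by (intro tendsto_diff LIMSEQ_Suc Vt_lim)
  then show "(\<lambda>t. Vt (Suc t) s - Vt t s) \<longlonglongrightarrow> 0" by simp
qed

lemma pos_to_0: assumes m: "0 < Uinf s a" shows "(\<lambda>t. pit t s a) \<longlonglongrightarrow> 0"
proof -
  define m where "m = Uinf s a"
  have m0: "0 < m" using m by (simp add: m_def)
  define c where "c = \<alpha> * (m/2)^2 / 2 / Zm"
  have c0: "0 < c" unfolding c_def using m0 alpha Zm_pos by simp
  have ev: "eventually (\<lambda>t. m/2 < U t s a) sequentially"
    using order_tendstoD(1)[OF U_lim, of "m/2" s a] m0 by (simp add: m_def)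
  show ?thesis
  proof (rule tendsto_sandwich[where f = "\<lambda>_. 0" and h = "\<lambda>t. I t s / c"])
    show "eventually (\<lambda>t. 0 \<le> pit t s a) sequentially" using pos by (simp add: less_imp_le)
    show "eventually (\<lambda>t. pit t s a \<le> I t s / c) sequentially"
      using ev
    proof eventually_elim
      case (elim t)
      have "(m/2)^2 \<le> (U t s a)^2" using elim m0 by (intro power_mono) auto
      then have "\<alpha> * (m/2)^2 / 2 \<le> \<alpha> * (U t s a)^2 / 2" using alpha by simp
      also have "\<dots> \<le> (exp (g t s a) - 1) * U t s a" using elim m0 by (intro eg_lb) simp
      finally have "\<alpha> * (m/2)^2 / 2 / Zm \<le> (exp (g t s a) - 1) * U t s a / Zm"
        by (rule divide_right_mono[OF _ less_imp_le[OF Zm_pos]])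
      then have "pit t s a * c \<le> pit t s a * ((exp (g t s a) - 1) * U t s a / Zm)"
        unfolding c_def using pos[of t s a] by (intro mult_left_mono) auto
      also have "\<dots> \<le> I t s" using I_lb[of t s a] by simp
      finally show ?case using c0 by (simp add: le_divide_eq)
    qed
    show "(\<lambda>t. 0) \<longlonglongrightarrow> (0::real)" by simp
    show "(\<lambda>t. I t s / c) \<longlonglongrightarrow> 0" using tendsto_divide[OF I_lim[of s] tendsto_const[of c]] c0 by simp
  qed
qed

lemma ratio_mono:
  assumes "g t s b \<le> g t s a"
  shows "pit (Suc t) s b / pit (Suc t) s a \<le> pit t s b / pit t s a"
proof -
  have "pit (Suc t) s b / pit (Suc t) s a = (pit t s b / pit t s a) * (exp (g t s b) / exp (g t s a))"
    using Zpos[of t s] pos[of t s a] by (simp add: pit_Suc field_simps)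
  also have "\<dots> \<le> (pit t s b / pit t s a) * 1"
    using assms pos[of t s a] pos[of t s b] by (intro mult_left_mono) auto
  finally show ?thesis by simp
qed

lemma Uinf_le: "Uinf s a \<le> 0"
proof (rule ccontr)
  assume "\<not> Uinf s a \<le> 0"
  then have m0: "0 < Uinf s a" by simp
  define m where "m = Uinf s a"
  have mp: "0 < m" using m0 by (simp add: m_def)
  have lim_a: "(\<lambda>t. pit t s a) \<longlonglongrightarrow> 0" by (rule pos_to_0[OF m0])
  have all0: "(\<lambda>t. pit t s b) \<longlonglongrightarrow> 0" for b
  proof (cases "0 < Uinf s b")
    case True then show ?thesis by (rule pos_to_0)
  next
    case False
    have e1: "eventually (\<lambda>t. m/2 < U t s a) sequentially"
      using order_tendstoD(1)[OF U_lim, of "m/2" s a] m0 by (simp add: m_def)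
    have e2: "eventually (\<lambda>t. U t s b < m/4) sequentially"
      using order_tendstoD(2)[OF U_lim, of s b "m/4"] m0 False by (simp add: m_def)
    have "eventually (\<lambda>t. g t s b \<le> g t s a) sequentially"
      using e1 e2
    proof eventually_elim
      case (elim t)
      have "g t s b \<le> \<alpha> * max (U t s b) 0" by (rule g_le)
      also have "\<dots> \<le> \<alpha> * (m/4)" using elim mp alpha by (intro mult_left_mono) (auto simp: max_def)
      also have "\<dots> \<le> \<alpha> * U t s a / 2" using elim alpha by simp
      also have "\<dots> \<le> g t s a" using elim mp by (intro g_ge_half) simp
      finally show ?case .
    qed
    then obtain T where T: "\<And>t. t \<ge> T \<Longrightarrow> g t s b \<le> g t s a"
      unfolding eventually_sequentially by blast
    define R where "R = pit T s b / pit T s a"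
    have Rt: "pit t s b / pit t s a \<le> R" if "t \<ge> T" for t
      using that
    proof (induction t rule: dec_induct)
      case base then show ?case by (simp add: R_def)
    next
      case (step t)
      then show ?case using ratio_mono[OF T[of t]] by linarith
    qed
    show ?thesis
    proof (rule tendsto_sandwich[where f = "\<lambda>_. 0" and h = "\<lambda>t. R * pit t s a"])
      show "eventually (\<lambda>t. 0 \<le> pit t s b) sequentially" using pos by (simp add: less_imp_le)
      show "eventually (\<lambda>t. pit t s b \<le> R * pit t s a) sequentially"
        unfolding eventually_sequentially
      proof (intro exI[of _ T] allI impI)
        fix t assume "T \<le> t"
        then have "pit t s b / pit t s a \<le> R" by (rule Rt)
        then show "pit t s b \<le> R * pit t s a" using pos[of t s a] by (simp add: divide_le_eq)
      qed
      show "(\<lambda>t. 0) \<longlonglongrightarrow> (0::real)" by simp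
      show "(\<lambda>t. R * pit t s a) \<longlonglongrightarrow> 0" using tendsto_mult[OF tendsto_const[of R] lim_a] by simp
    qed
  qed
  have "(\<lambda>t. \<Sum>b\<in>UNIV. pit t s b) \<longlonglongrightarrow> (\<Sum>b\<in>UNIV. 0::real)"
    using tendsto_sum[of UNIV "\<lambda>b t. pit t s b" "\<lambda>b. 0" sequentially] all0 by simp
  moreover have "(\<lambda>t. \<Sum>b\<in>UNIV. pit t s b) = (\<lambda>t. 1)" using policy_sum[OF pol] by simp
  ultimately have "(\<lambda>t. 1::real) \<longlonglongrightarrow> 0" by simp
  then show False using LIMSEQ_unique[OF tendsto_const[of "1::real"]] by fastforce
qed

lemma Vinf_eq: "Vinf s = Vs s"
proof (rule antisym)
  show "Vinf s \<le> Vs s" by (rule LIMSEQ_le_const2[OF Vt_lim]) (auto intro: Vt_le)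
  show "Vs s \<le> Vinf s"
  proof (rule supersol[OF ps])
    fix x
    have "rp \<pi>s x + \<gamma> * K \<pi>s x Vinf = (\<Sum>a\<in>UNIV. \<pi>s x a * Qinf x a)"
      unfolding Qinf_def rp_def K_def by (simp add: algebra_simps sum.distrib sum_distrib_left)
    also have "\<dots> \<le> (\<Sum>a\<in>UNIV. \<pi>s x a * Vinf x)"
      using Uinf_le policy_nn[OF ps] by (intro sum_mono mult_left_mono) (auto simp: Uinf_def)
    also have "\<dots> = Vinf x" using policy_sum[OF ps] by (simp flip: sum_distrib_right)
    finally show "rp \<pi>s x + \<gamma> * K \<pi>s x Vinf \<le> Vinf x" .
  qed
qed

lemma Uinf_eq: "Uinf s a = Qs s a - Vs s"
  unfolding Uinf_def Qinf_def Vinf_eq by (simp add: Qf_def Vinf_eq)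

end



locale dyn2 = dyn P r \<gamma> \<pi>s \<eta> \<alpha> \<pi>0 for P :: "'s::finite \<Rightarrow> 'a::finite \<Rightarrow> 's \<Rightarrow> real" and r \<gamma> \<pi>s \<eta> \<alpha> \<pi>0 +
  fixes \<rho> :: "'s \<Rightarrow> real" and dmin :: real
  assumes rho: "is_dist \<rho>" and dmin_pos: "dmin > 0"
    and dmin: "\<And>\<pi> s. full_support \<pi> \<Longrightarrow> visit P \<gamma> \<rho> \<pi> s \<ge> dmin"
begin

lemma ev_signs: "\<exists>T. \<forall>t\<ge>T. \<forall>s b. b \<noteq> astar s \<longrightarrow> U t s b < 0"
proof -
  have "eventually (\<lambda>t. b \<noteq> astar s \<longrightarrow> U t s b < 0) sequentially" for s b
  proof (cases "b = astar s")
    case False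
    have "Uinf s b < 0" using strict[OF False] by (simp add: Uinf_eq)
    then have "eventually (\<lambda>t. U t s b < 0) sequentially" by (rule order_tendstoD(2)[OF U_lim])
    then show ?thesis by eventually_elim simp
  qed simp
  then have "eventually (\<lambda>t. \<forall>b. b \<noteq> astar s \<longrightarrow> U t s b < 0) sequentially" for s
    by (rule eventually_all_finite)
  then have "eventually (\<lambda>t. \<forall>s b. b \<noteq> astar s \<longrightarrow> U t s b < 0) sequentially"
    by (rule eventually_all_finite)
  then show ?thesis unfolding eventually_sequentially by blast
qed

lemma Ustar_nn:
  assumes sg: "\<And>b. b \<noteq> astar s \<Longrightarrow> U t s b < 0"
  shows "0 \<le> U t s (astar s)"
proof -
  have "0 = (\<Sum>a\<in>UNIV. pit t s a * U t s a)" using sumU by simp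
  also have "\<dots> = pit t s (astar s) * U t s (astar s) + (\<Sum>a\<in>UNIV - {astar s}. pit t s a * U t s a)"
    by (rule sum.remove) auto
  also have "(\<Sum>a\<in>UNIV - {astar s}. pit t s a * U t s a) \<le> 0"
  proof (rule sum_nonpos)
    fix x assume "x \<in> UNIV - {astar s}"
    then have "U t s x < 0" using sg by auto
    then show "pit t s x * U t s x \<le> 0" using pos[of t s x] by (simp add: mult_nonneg_nonpos less_imp_le)
  qed
  finally have "0 \<le> pit t s (astar s) * U t s (astar s)" by simp
  then show ?thesis using pos[of t s "astar s"] by (simp add: zero_le_mult_iff)
qed

lemma pstar_mono:
  assumes sg: "\<And>b. b \<noteq> astar s \<Longrightarrow> U t s b < 0"
  shows "pit t s (astar s) \<le> pit (Suc t) s (astar s)"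
proof -
  have gs: "0 \<le> g t s (astar s)" using Ustar_nn[OF sg] by (rule g_sign(3))
  have "g t s a \<le> g t s (astar s)" for a
  proof (cases "a = astar s")
    case False then show ?thesis using g_sign(2)[OF sg[OF False]] gs by simp
  qed simp
  then have "Z t s \<le> (\<Sum>a\<in>UNIV. pit t s a * exp (g t s (astar s)))"
    unfolding Z_def using pos by (intro sum_mono mult_left_mono) (auto intro: less_imp_le)
  also have "\<dots> = exp (g t s (astar s))" using policy_sum[OF pol] by (simp flip: sum_distrib_right)
  finally have "Z t s \<le> exp (g t s (astar s))" .
  then have "pit t s (astar s) * exp (g t s (astar s)) / exp (g t s (astar s)) \<le> pit t s (astar s) * exp (g t s (astar s)) / Z t s"
    using Zpos[of t s] pos[of t s "astar s"] by (intro divide_left_mono) auto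
  then show ?thesis by (simp add: pit_Suc)
qed

definition delta where "delta t = Vrho P r \<gamma> \<rho> \<pi>s - Vrho P r \<gamma> \<rho> (pit t)"

lemma rho_nn: "0 \<le> \<rho> s" using rho by (simp add: is_dist_def)
lemma rho_sum: "(\<Sum>s\<in>UNIV. \<rho> s) = 1" using rho by (simp add: is_dist_def)

lemma delta_eq: "delta t = (\<Sum>s\<in>UNIV. \<rho> s * (Vs s - Vt t s))"
  unfolding delta_def Vrho_def Vt_def by (simp add: algebra_simps sum_subtractf)

lemma delta_nn: "0 \<le> delta t"
  unfolding delta_eq using Vt_le rho_nn by (intro sum_nonneg mult_nonneg_nonneg) auto

lemma delta_ub:
  assumes b: "\<And>s. U t s (astar s) \<le> c"
  shows "delta t \<le> c / (1 - \<gamma>)"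
proof -
  let ?D = "\<lambda>s. Vs s - Vt t s"
  have D: "?D s \<le> c / (1 - \<gamma>)" for s
  proof (rule cmp[OF det_policy[of astar], where B = "\<lambda>s. U t s (astar s)"])
    fix s
    let ?A = "(\<Sum>s'\<in>UNIV. P s (astar s) s' * Vs s')"
    let ?B = "(\<Sum>s'\<in>UNIV. P s (astar s) s' * Vt t s')"
    have "K (det astar) s ?D = (\<Sum>s'\<in>UNIV. P s (astar s) s' * ?D s')"
      unfolding K_def by (rule det_sum)
    also have "\<dots> = ?A - ?B" by (simp add: algebra_simps sum_subtractf)
    finally have "\<gamma> * K (det astar) s ?D = \<gamma> * ?A - \<gamma> * ?B" by (simp add: right_diff_distrib)
    moreover have "Vs s = r s (astar s) + \<gamma> * ?A"
      using astar[of s] by (simp add: Qf_def)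
    moreover have "U t s (astar s) = r s (astar s) + \<gamma> * ?B - Vt t s" by (rule U_expand)
    ultimately show "?D s \<le> U t s (astar s) + \<gamma> * K (det astar) s ?D" by linarith
  qed (rule b)
  have "delta t \<le> (\<Sum>s\<in>UNIV. \<rho> s * (c / (1 - \<gamma>)))"
    unfolding delta_eq using D rho_nn by (intro sum_mono mult_left_mono) auto
  also have "\<dots> = (\<Sum>s\<in>UNIV. \<rho> s) * (c / (1 - \<gamma>))" by (rule sum_distrib_right[symmetric])
  also have "\<dots> = c / (1 - \<gamma>)" using rho_sum by simp
  finally show ?thesis .
qed

lemma delta_dec: "dmin * I t s0 \<le> (1 - \<gamma>) * (delta t - delta (Suc t))"
proof -
  have "(\<Sum>s\<in>UNIV. visit P \<gamma> \<rho> (pit (Suc t)) s * I t s) \<le> (1 - \<gamma>) * (\<Sum>s\<in>UNIV. \<rho> s * (Vt (Suc t) s - Vt t s))"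
    using pdl_visit[OF pol[of t] pol[of "Suc t"] rho] I_nn unfolding I_def U_def Vt_def by blast
  also have "(\<Sum>s\<in>UNIV. \<rho> s * (Vt (Suc t) s - Vt t s)) = delta t - delta (Suc t)"
    unfolding delta_eq by (simp add: algebra_simps sum_subtractf)
  finally have h: "(\<Sum>s\<in>UNIV. visit P \<gamma> \<rho> (pit (Suc t)) s * I t s) \<le> (1 - \<gamma>) * (delta t - delta (Suc t))" .
  have vd: "dmin \<le> visit P \<gamma> \<rho> (pit (Suc t)) s" for s by (rule dmin[OF fs])
  have "dmin * I t s0 \<le> visit P \<gamma> \<rho> (pit (Suc t)) s0 * I t s0"
    using vd I_nn by (intro mult_right_mono) auto
  also have "\<dots> \<le> (\<Sum>s\<in>UNIV. visit P \<gamma> \<rho> (pit (Suc t)) s * I t s)"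
  proof (rule member_le_sum)
    fix x
    have "0 \<le> visit P \<gamma> \<rho> (pit (Suc t)) x" by (rule order_trans[OF less_imp_le[OF dmin_pos] vd])
    then show "0 \<le> visit P \<gamma> \<rho> (pit (Suc t)) x * I t x" using I_nn by simp
  qed auto
  finally show ?thesis using h by linarith
qed

lemma main: "(\<lambda>t. delta t) \<in> O(\<lambda>t. 1 / real t)"
proof -
  obtain T where T: "\<And>t s b. t \<ge> T \<Longrightarrow> b \<noteq> astar s \<Longrightarrow> U t s b < 0" using ev_signs by blast
  define p where "p = Min (range (\<lambda>s. pit T s (astar s)))"
  have p0: "0 < p" unfolding p_def using pos by (subst Min_gr_iff) auto
  have pT: "p \<le> pit T s (astar s)" for s unfolding p_def by simp
  have pt: "p \<le> pit t s (astar s)" if "t \<ge> T" for t s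
    using that
  proof (induction t rule: dec_induct)
    case base then show ?case by (rule pT)
  next
    case (step t)
    then show ?case using pstar_mono[of s t] T[of t] by fastforce
  qed
  define \<kappa> where "\<kappa> = dmin * p * \<alpha> * (1 - \<gamma>) / (2 * Zm)"
  have k0: "0 < \<kappa>" unfolding \<kappa>_def using dmin_pos p0 alpha g1 Zm_pos by simp
  show ?thesis
  proof (rule rate[OF k0])
    show "0 \<le> delta t" for t by (rule delta_nn)
    fix t assume tT: "T \<le> t"
    define u where "u = Max (range (\<lambda>s. U t s (astar s)))"
    have "u \<in> range (\<lambda>s. U t s (astar s))" unfolding u_def by (rule Max_in) auto
    then obtain s0 where s0: "U t s0 (astar s0) = u" by auto
    have ub: "U t s (astar s) \<le> u" for s unfolding u_def by simp
    have u0: "0 \<le> u" using Ustar_nn[of s0 t] T[OF tT] s0 by auto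
    have du: "delta t \<le> u / (1 - \<gamma>)" by (rule delta_ub[OF ub])
    then have du': "(1 - \<gamma>) * delta t \<le> u" using g1 by (simp add: field_simps)
    have "0 \<le> (1 - \<gamma>) * delta t" using g1 delta_nn by simp
    then have sq: "((1 - \<gamma>) * delta t)^2 \<le> u^2" using du' by (intro power_mono) auto
    have "p * (\<alpha> * u^2 / 2) / Zm \<le> pit t s0 (astar s0) * ((exp (g t s0 (astar s0)) - 1) * U t s0 (astar s0)) / Zm"
    proof (rule divide_right_mono[OF _ less_imp_le[OF Zm_pos]])
      show "p * (\<alpha> * u^2 / 2) \<le> pit t s0 (astar s0) * ((exp (g t s0 (astar s0)) - 1) * U t s0 (astar s0))"
        using pt[OF tT, of s0] eg_lb[of t s0 "astar s0"] s0 u0 p0 alpha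
        by (intro mult_mono) auto
    qed
    also have "\<dots> \<le> I t s0" by (rule I_lb)
    finally have Ib: "p * (\<alpha> * u^2 / 2) / Zm \<le> I t s0" .
    have "dmin * (p * (\<alpha> * u^2 / 2) / Zm) \<le> dmin * I t s0"
      using Ib dmin_pos by (intro mult_left_mono) auto
    also have "\<dots> \<le> (1 - \<gamma>) * (delta t - delta (Suc t))" by (rule delta_dec)
    finally have h1: "dmin * (p * (\<alpha> * u^2 / 2) / Zm) \<le> (1 - \<gamma>) * (delta t - delta (Suc t))" .
    have "dmin * (p * (\<alpha> * ((1 - \<gamma>) * delta t)^2 / 2) / Zm) \<le> dmin * (p * (\<alpha> * u^2 / 2) / Zm)"
      using sq dmin_pos p0 alpha Zm_pos by (intro mult_left_mono divide_right_mono) auto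
    also note h1
    finally have "(1 - \<gamma>) * (\<kappa> * (delta t)^2) \<le> (1 - \<gamma>) * (delta t - delta (Suc t))"
      unfolding \<kappa>_def by (simp add: power2_eq_square algebra_simps)
    then have "\<kappa> * (delta t)^2 \<le> delta t - delta (Suc t)" using g1 by simp
    then show "delta (Suc t) \<le> delta t - \<kappa> * (delta t)^2" by simp
  qed
qed

end


theorem corollary4:
  fixes P :: "'s::finite \<Rightarrow> 'a::finite \<Rightarrow> 's \<Rightarrow> real"
    and r :: "'s \<Rightarrow> 'a \<Rightarrow> real" and \<gamma> :: real and \<rho> :: "'s \<Rightarrow> real"
    and \<pi>s \<pi>0 :: "'s \<Rightarrow> 'a \<Rightarrow> real" and dmin \<eta> :: real
  assumes mdp: "is_mdp P r \<gamma> \<rho>"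
    and opt: "optimal_policy P r \<gamma> \<pi>s"
    and uniq: "\<And>\<pi>. optimal_policy P r \<gamma> \<pi> \<Longrightarrow> \<pi> = \<pi>s"
    and dmin_pos: "dmin > 0"
    and dmin: "\<And>\<pi> s. full_support \<pi> \<Longrightarrow> visit P \<gamma> \<rho> \<pi> s \<ge> dmin"
    and eta: "\<eta> > 0"
    and init: "full_support \<pi>0"
  shows "\<exists>\<alpha>0>0. \<forall>\<alpha>. 0 < \<alpha> \<and> \<alpha> \<le> \<alpha>0 \<longrightarrow>
           (\<lambda>t. Vrho P r \<gamma> \<rho> \<pi>s - Vrho P r \<gamma> \<rho> (dg_iter P r \<gamma> \<eta> \<alpha> \<pi>0 t))
              \<in> O(\<lambda>t. 1 / real t)"
proof (intro exI[of _ 1] conjI allI impI)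
  show "(0::real) < 1" by simp
  fix \<alpha> :: real assume a: "0 < \<alpha> \<and> \<alpha> \<le> 1"
  have m: "\<And>s a. is_dist (P s a)" "\<And>s a. 0 \<le> r s a" "\<And>s a. r s a \<le> 1" "0 \<le> \<gamma>" "\<gamma> < 1" "is_dist \<rho>"
    using mdp by (auto simp: is_mdp_def)
  interpret d: dyn2 P r \<gamma> \<pi>s \<eta> \<alpha> \<pi>0 \<rho> dmin
  proof unfold_locales
    show "\<And>s a s'. 0 \<le> P s a s'" using m(1) by (simp add: is_dist_def)
    show "\<And>s a. (\<Sum>s'\<in>UNIV. P s a s') = 1" using m(1) by (simp add: is_dist_def)
    show "\<And>s a. 0 \<le> r s a" by (rule m(2))
    show "\<And>s a. r s a \<le> 1" by (rule m(3))
    show "0 \<le> \<gamma>" by (rule m(4))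
    show "\<gamma> < 1" by (rule m(5))
    show "optimal_policy P r \<gamma> \<pi>s" by (rule opt)
    show "\<And>\<pi>. optimal_policy P r \<gamma> \<pi> \<Longrightarrow> \<pi> = \<pi>s" by (rule uniq)
    show "0 < \<eta>" by (rule eta)
    show "0 < \<alpha>" using a by simp
    show "full_support \<pi>0" by (rule init)
    show "is_dist \<rho>" by (rule m(6))
    show "0 < dmin" by (rule dmin_pos)
    show "\<And>\<pi> s. full_support \<pi> \<Longrightarrow> dmin \<le> visit P \<gamma> \<rho> \<pi> s" by (rule dmin)
  qed
  show "(\<lambda>t. Vrho P r \<gamma> \<rho> \<pi>s - Vrho P r \<gamma> \<rho> (dg_iter P r \<gamma> \<eta> \<alpha> \<pi>0 t)) \<in> O(\<lambda>t. 1 / real t)"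
    using d.main unfolding d.delta_def d.pit_def .
qed

end
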